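(* Let $G$ be a connected graph of order at least three. Then $\gamma(G)=\gamma_{\rm cer}(G)$ if and only if $G$ has a $\gamma$-set $D$ such that every vertex in $D$ has at least two neighbors in $V_G-D$.
   Context: All graphs are finite and simple; $V_G$ is the vertex set of $G$ and $N_G(v)$ the open neighborhood of $v$. A set $D\subseteq V_G$ is a dominating set of $G$ if every vertex of $V_G-D$ has a neighbor in $D$; $\gamma(G)$ is the minimum cardinality of a dominating set, and a $\gamma$-set is a dominating set of cardinality $\gamma(G)$. A set $D\subseteq V_G$ is a certified dominating set of $G$ if $D$ is a dominating set of $G$ and every vertex of $D$ has either zero or at least two neighbors in $V_G-D$; $\gamma_{\rm cer}(G)$ is the minimum cardinality of a certified dominating set of $G$. *)

theory Defs
  imports Main
begin

definition simple_graph :: "'a set \<Rightarrow> ('a \<Rightarrow> 'a \<Rightarrow> bool) \<Rightarrow> bool" where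
  "simple_graph V E \<longleftrightarrow> finite V \<and> (\<forall>u v. E u v \<longrightarrow> u \<in> V \<and> v \<in> V)
     \<and> (\<forall>u v. E u v \<longrightarrow> E v u) \<and> (\<forall>v. \<not> E v v)"

definition nbhd :: "'a set \<Rightarrow> ('a \<Rightarrow> 'a \<Rightarrow> bool) \<Rightarrow> 'a \<Rightarrow> 'a set" where
  "nbhd V E v = {u \<in> V. E v u}"

definition connected_graph :: "'a set \<Rightarrow> ('a \<Rightarrow> 'a \<Rightarrow> bool) \<Rightarrow> bool" where
  "connected_graph V E \<longleftrightarrow> V \<noteq> {} \<and>
     (\<forall>u \<in> V. \<forall>v \<in> V. (\<lambda>x y. E x y)\<^sup>*\<^sup>* u v)"

definition dominating_set :: "'a set \<Rightarrow> ('a \<Rightarrow> 'a \<Rightarrow> bool) \<Rightarrow> 'a set \<Rightarrow> bool" where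
  "dominating_set V E D \<longleftrightarrow> D \<subseteq> V \<and> (\<forall>v \<in> V - D. \<exists>u \<in> D. E v u)"

definition domination_number :: "'a set \<Rightarrow> ('a \<Rightarrow> 'a \<Rightarrow> bool) \<Rightarrow> nat" where
  "domination_number V E = (LEAST k. \<exists>D. dominating_set V E D \<and> card D = k)"

definition gamma_set :: "'a set \<Rightarrow> ('a \<Rightarrow> 'a \<Rightarrow> bool) \<Rightarrow> 'a set \<Rightarrow> bool" where
  "gamma_set V E D \<longleftrightarrow> dominating_set V E D \<and> card D = domination_number V E"

definition certified_dominating_set :: "'a set \<Rightarrow> ('a \<Rightarrow> 'a \<Rightarrow> bool) \<Rightarrow> 'a set \<Rightarrow> bool" where
  "certified_dominating_set V E D \<longleftrightarrow> dominating_set V E D \<and>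
     (\<forall>v \<in> D. card (nbhd V E v \<inter> (V - D)) = 0 \<or> card (nbhd V E v \<inter> (V - D)) \<ge> 2)"

definition certified_domination_number :: "'a set \<Rightarrow> ('a \<Rightarrow> 'a \<Rightarrow> bool) \<Rightarrow> nat" where
  "certified_domination_number V E = (LEAST k. \<exists>D. certified_dominating_set V E D \<and> card D = k)"

end

theory Submission
  imports Defs
begin

lemma dom_V: "simple_graph V E \<Longrightarrow> certified_dominating_set V E V"
  unfolding certified_dominating_set_def dominating_set_def by auto

lemma dom_le: "dominating_set V E D \<Longrightarrow> domination_number V E \<le> card D"
  unfolding domination_number_def by (rule Least_le) blast

lemma cdom_le: "certified_dominating_set V E D \<Longrightarrow> certified_domination_number V E \<le> card D"
  unfolding certified_domination_number_def by (rule Least_le) blast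

lemma cdom_ex: "simple_graph V E \<Longrightarrow> \<exists>D. certified_dominating_set V E D \<and> card D = certified_domination_number V E"
  unfolding certified_domination_number_def
  by (rule LeastI_ex) (use dom_V in blast)

lemma dom_ex: "simple_graph V E \<Longrightarrow> \<exists>D. dominating_set V E D \<and> card D = domination_number V E"
  unfolding domination_number_def
  by (rule LeastI_ex) (use dom_V[unfolded certified_dominating_set_def] in blast)

lemma has_nb:
  assumes "connected_graph V E" "card V \<ge> 3" "v \<in> V"
  shows "\<exists>u. E v u"
proof -
  have "\<not> V \<subseteq> {v}"
  proof
    assume "V \<subseteq> {v}"
    then have "card V \<le> card {v}" by (intro card_mono) auto
    then show False using assms(2) by simp
  qed
  then obtain w where w: "w \<in> V" "w \<noteq> v" by blast
  have "E\<^sup>*\<^sup>* v w" using assms(1,3) w unfolding connected_graph_def by blast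
  then show ?thesis using w(2) by (cases rule: converse_rtranclpE) auto
qed

theorem theorem2p1:
  fixes V :: "'a set" and E :: "'a \<Rightarrow> 'a \<Rightarrow> bool"
  assumes "simple_graph V E"
    and "connected_graph V E"
    and "card V \<ge> 3"
  shows "domination_number V E = certified_domination_number V E \<longleftrightarrow>
    (\<exists>D. gamma_set V E D \<and> (\<forall>v \<in> D. card (nbhd V E v \<inter> (V - D)) \<ge> 2))"
proof
  assume eq: "domination_number V E = certified_domination_number V E"
  obtain D where D: "certified_dominating_set V E D" "card D = certified_domination_number V E"
    using cdom_ex[OF assms(1)] by blast
  have fin: "finite V" using assms(1) unfolding simple_graph_def by blast
  have dD: "dominating_set V E D" using D(1) unfolding certified_dominating_set_def by blast
  have DV: "D \<subseteq> V" using dD unfolding dominating_set_def by blast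
  have finD: "finite D" using DV fin finite_subset by blast
  have g: "gamma_set V E D" using dD D(2) eq unfolding gamma_set_def by simp
  have "card (nbhd V E v \<inter> (V - D)) \<ge> 2" if v: "v \<in> D" for v
  proof (rule ccontr)
    assume "\<not> ?thesis"
    then have c0: "card (nbhd V E v \<inter> (V - D)) = 0" using D(1) v unfolding certified_dominating_set_def by auto
    have fn: "finite (nbhd V E v \<inter> (V - D))" using fin unfolding nbhd_def by auto
    have empt: "nbhd V E v \<inter> (V - D) = {}" using c0 fn by simp
    obtain u where u: "E v u" using has_nb[OF assms(2,3)] v DV by blast
    have uV: "u \<in> V" using u assms(1) unfolding simple_graph_def by blast
    have uD: "u \<in> D" using empt u uV unfolding nbhd_def by blast
    have uv: "u \<noteq> v" using u assms(1) unfolding simple_graph_def by blast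
    have "dominating_set V E (D - {v})"
      unfolding dominating_set_def
    proof (intro conjI ballI)
      show "D - {v} \<subseteq> V" using DV by blast
    next
      fix x assume x: "x \<in> V - (D - {v})"
      show "\<exists>y\<in>D - {v}. E x y"
      proof (cases "x = v")
        case True then show ?thesis using u uD uv by blast
      next
        case False
        then have "x \<in> V - D" using x by blast
        then obtain y where y: "y \<in> D" "E x y" using dD unfolding dominating_set_def by blast
        have "y \<noteq> v"
        proof
          assume "y = v"
          then have "E v x" using y assms(1) unfolding simple_graph_def by blast
          then show False using empt \<open>x \<in> V - D\<close> unfolding nbhd_def by blast
        qed
        then show ?thesis using y by blast
      qed
    qed
    then have "domination_number V E \<le> card (D - {v})" by (rule dom_le)
    moreover have "card (D - {v}) < card D" using finD v by (meson card_Diff1_less)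
    ultimately show False using D(2) eq by simp
  qed
  then show "\<exists>D. gamma_set V E D \<and> (\<forall>v \<in> D. card (nbhd V E v \<inter> (V - D)) \<ge> 2)" using g by blast
next
  assume "\<exists>D. gamma_set V E D \<and> (\<forall>v \<in> D. card (nbhd V E v \<inter> (V - D)) \<ge> 2)"
  then obtain D where D: "gamma_set V E D" "\<forall>v \<in> D. card (nbhd V E v \<inter> (V - D)) \<ge> 2" by blast
  have "certified_dominating_set V E D" using D unfolding gamma_set_def certified_dominating_set_def by blast
  then have le1: "certified_domination_number V E \<le> domination_number V E"
    using cdom_le D(1) unfolding gamma_set_def by fastforce
  obtain C where C: "certified_dominating_set V E C" "card C = certified_domination_number V E"
    using cdom_ex[OF assms(1)] by blast
  have "domination_number V E \<le> card C" using C(1) dom_le unfolding certified_dominating_set_def by blast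
  then show "domination_number V E = certified_domination_number V E" using le1 C(2) by simp
qed

end
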